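(* Let $f:\mathbb{N}\to[0,\infty)$ satisfy $\sum_{n\ge1}f(n)<\infty$, let $(\lambda_n)_{n\in\mathbb{N}}$ be a sequence of positive real numbers, and define $F(x):=\sum_{n\ge1}f(n)e(\lambda_n x)$. Let $\beta\in\left(-\frac{\pi}{2},\frac{\pi}{2}\right)$, let $0<r<1$, and let $\mathcal{M}\subset\mathbb{N}$ be a finite set. Define $$R(t):=\prod_{m\in\mathcal{M}}\left(1-re(\lambda_m t)\right)^{-1}.$$ Let $K\in L^1(\mathbb{R})$ be a real-valued function with $\mathrm{supp}(K)\subset[0,\infty)$ such that, for some positive constant $\delta$ and all $\xi\in\mathbb{R}$, $$\mathrm{Re}\left(e^{i\beta}\widehat{K}(\xi)\right)\ge\delta\cdot\mathrm{Re}\left(\widehat{K}(\xi)\right)\ge0.$$ Then for all real numbers $T\ge1$, $$\int_0^\infty\mathrm{Re}\left(e^{i\beta}F(x)\right)|R(x)|^2K\left(\frac{x}{T}\right)dx\ \ge\ \delta r\left(\sum_{m\in\mathcal{M}}f(m)\right)\int_0^\infty|R(x)|^2K\left(\frac{x}{T}\right)dx.$$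
   Context: Here $e(t):=e^{2\pi i t}$, and the Fourier transform is normalized as $\widehat{K}(\xi)=\int_{\mathbb{R}}K(x)e(-\xi x)\,dx$. *)

theory Defs
  imports "HOL-Analysis.Analysis"
begin

definition e :: "real \<Rightarrow> complex" where
  "e t = exp (2 * of_real pi * \<i> * of_real t)"

definition fourier :: "(real \<Rightarrow> real) \<Rightarrow> real \<Rightarrow> complex" where
  "fourier K \<xi> = (LINT x|lborel. of_real (K x) * e (- \<xi> * x))"

end

theory Submission
  imports Defs
begin

lemma e_add: "e (a + b) = e a * e b"
  unfolding e_def by (simp add: exp_add[symmetric] algebra_simps)

lemma e_zero[simp]: "e 0 = 1" by (simp add: e_def)

lemma norm_e[simp]: "cmod (e t) = 1"
  unfolding e_def by (simp add: norm_exp_eq_Re)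

lemma cnj_e: "cnj (e t) = e (- t)"
  unfolding e_def by (simp add: exp_cnj)

lemma e_cnj_mult: "e t * cnj (e t) = 1"
  by (simp add: cnj_e e_add[symmetric])

lemma e_pow: "e t ^ k = e (real k * t)"
  by (induction k) (auto simp: e_add algebra_simps)

lemma e_cont: "continuous_on UNIV (\<lambda>x. e (c * x))"
  unfolding e_def by (intro continuous_intros)

lemma e_meas[measurable]: "(\<lambda>x. e (c * x)) \<in> borel_measurable borel"
  by (rule borel_measurable_continuous_onI[OF e_cont])

fun tp :: "(real \<times> real) list \<Rightarrow> real \<Rightarrow> complex" where
  "tp [] x = 0"
| "tp (p # L) x = of_real (fst p) * e (snd p * x) + tp L x"

definition nonnegL :: "(real \<times> real) list \<Rightarrow> bool" where
  "nonnegL L \<longleftrightarrow> (\<forall>p\<in>set L. fst p \<ge> 0)"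

lemma tp_meas[measurable]: "tp L \<in> borel_measurable borel"
proof (induction L)
  case Nil then show ?case by (simp add: tp.simps(1)[abs_def])
next
  case (Cons p L)
  have "tp (p # L) = (\<lambda>x. of_real (fst p) * e (snd p * x) + tp L x)" by auto
  then show ?case using Cons by simp
qed

lemma tp_append: "tp (L1 @ L2) x = tp L1 x + tp L2 x"
  by (induction L1) auto

definition scL :: "real \<times> real \<Rightarrow> (real \<times> real) list \<Rightarrow> (real \<times> real) list" where
  "scL p L = map (\<lambda>q. (fst p * fst q, snd p + snd q)) L"

lemma tp_scL: "tp (scL p L) x = of_real (fst p) * e (snd p * x) * tp L x"
  by (induction L) (auto simp: scL_def e_add algebra_simps)

fun mulL :: "(real \<times> real) list \<Rightarrow> (real \<times> real) list \<Rightarrow> (real \<times> real) list" where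
  "mulL [] L2 = []"
| "mulL (p # L1) L2 = scL p L2 @ mulL L1 L2"

lemma tp_mulL: "tp (mulL L1 L2) x = tp L1 x * tp L2 x"
  by (induction L1) (auto simp: tp_append tp_scL algebra_simps)

lemma nonneg_mulL: "nonnegL L1 \<Longrightarrow> nonnegL L2 \<Longrightarrow> nonnegL (mulL L1 L2)"
  by (induction L1) (auto simp: nonnegL_def scL_def)

definition cnjL :: "(real \<times> real) list \<Rightarrow> (real \<times> real) list" where
  "cnjL L = map (\<lambda>q. (fst q, - snd q)) L"

lemma tp_cnjL: "tp (cnjL L) x = cnj (tp L x)"
  by (induction L) (auto simp: cnjL_def cnj_e)

lemma nonneg_cnjL: "nonnegL L \<Longrightarrow> nonnegL (cnjL L)"
  by (auto simp: nonnegL_def cnjL_def)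

definition PD :: "(real \<Rightarrow> complex) \<Rightarrow> bool" where
  "PD G \<longleftrightarrow> (\<exists>Ls B. (\<forall>N. nonnegL (Ls N)) \<and> (\<forall>N x. cmod (tp (Ls N) x) \<le> B)
      \<and> (\<forall>x. (\<lambda>N. tp (Ls N) x) \<longlonglongrightarrow> G x))"

lemma PD_mult: assumes "PD G" "PD H" shows "PD (\<lambda>x. G x * H x)"
proof -
  obtain Ls B where L: "\<forall>N. nonnegL (Ls N)" "\<forall>N x. cmod (tp (Ls N) x) \<le> B"
      "\<forall>x. (\<lambda>N. tp (Ls N) x) \<longlonglongrightarrow> G x" using assms(1) unfolding PD_def by blast
  obtain Ls' B' where L': "\<forall>N. nonnegL (Ls' N)" "\<forall>N x. cmod (tp (Ls' N) x) \<le> B'"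
      "\<forall>x. (\<lambda>N. tp (Ls' N) x) \<longlonglongrightarrow> H x" using assms(2) unfolding PD_def by blast
  have "B' \<ge> 0" using L'(2) norm_ge_zero order_trans by blast
  have "B \<ge> 0" using L(2) norm_ge_zero order_trans by blast
  show ?thesis unfolding PD_def
  proof (intro exI[of _ "\<lambda>N. mulL (Ls N) (Ls' N)"] exI[of _ "B * B'"] conjI allI)
    fix N show "nonnegL (mulL (Ls N) (Ls' N))" using L L' nonneg_mulL by blast
  next
    fix N x show "cmod (tp (mulL (Ls N) (Ls' N)) x) \<le> B * B'"
      unfolding tp_mulL norm_mult using L(2) L'(2) \<open>B' \<ge> 0\<close> \<open>B \<ge> 0\<close>
      by (meson mult_mono norm_ge_zero)
  next
    fix x show "(\<lambda>N. tp (mulL (Ls N) (Ls' N)) x) \<longlonglongrightarrow> G x * H x"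
      unfolding tp_mulL using L(3) L'(3) by (intro tendsto_mult) auto
  qed
qed

lemma PD_cnj: assumes "PD G" shows "PD (\<lambda>x. cnj (G x))"
proof -
  obtain Ls B where L: "\<forall>N. nonnegL (Ls N)" "\<forall>N x. cmod (tp (Ls N) x) \<le> B"
      "\<forall>x. (\<lambda>N. tp (Ls N) x) \<longlonglongrightarrow> G x" using assms(1) unfolding PD_def by blast
  show ?thesis unfolding PD_def
    apply (intro exI[of _ "\<lambda>N. cnjL (Ls N)"] exI[of _ B] conjI allI)
    using L by (auto simp: nonneg_cnjL tp_cnjL intro: tendsto_cnj)
qed

lemma PD_char: "a \<ge> 0 \<Longrightarrow> PD (\<lambda>x. of_real a * e (\<nu> * x))"
  unfolding PD_def
  by (intro exI[of _ "\<lambda>N. [(a, \<nu>)]"] exI[of _ a] conjI allI) (auto simp: nonnegL_def norm_mult)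

lemma PD_one: "PD (\<lambda>x. 1)"
  using PD_char[of 1 0] by simp

lemma PD_prod: "finite S \<Longrightarrow> (\<And>i. i \<in> S \<Longrightarrow> PD (h i)) \<Longrightarrow> PD (\<lambda>x. \<Prod>i\<in>S. h i x)"
proof (induction S rule: finite_induct)
  case empty then show ?case by (simp add: PD_one)
next
  case (insert a S)
  then show ?case by (simp add: PD_mult)
qed

fun geoL :: "real \<Rightarrow> real \<Rightarrow> nat \<Rightarrow> (real \<times> real) list" where
  "geoL r l 0 = []"
| "geoL r l (Suc N) = (r ^ N, real N * l) # geoL r l N"

lemma tp_geoL: "tp (geoL r l N) x = (\<Sum>k<N. (of_real r * e (l * x)) ^ k)"
  by (induction N) (auto simp: power_mult_distrib e_pow algebra_simps)

lemma PD_geo: assumes "0 \<le> r" "r < 1" shows "PD (\<lambda>x. inverse (1 - of_real r * e (l * x)))"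
  unfolding PD_def
proof (intro exI[of _ "geoL r l"] exI[of _ "1 / (1 - r)"] conjI allI)
  fix N show "nonnegL (geoL r l N)"
    using assms by (induction N) (auto simp: nonnegL_def)
next
  fix N x
  have "cmod (tp (geoL r l N) x) \<le> (\<Sum>k<N. r ^ k)"
    unfolding tp_geoL
    by (rule order_trans[OF norm_sum]) (simp add: norm_mult norm_power abs_of_nonneg assms)
  also have "\<dots> \<le> 1 / (1 - r)"
    using assms by (simp add: sum_gp_strict divide_right_mono)
  finally show "cmod (tp (geoL r l N) x) \<le> 1 / (1 - r)" .
next
  fix x
  have n: "norm (of_real r * e (l * x)) < 1" using assms by (simp add: norm_mult)
  have "(\<lambda>k. (of_real r * e (l * x)) ^ k) sums (1 / (1 - of_real r * e (l * x)))"
    by (rule geometric_sums[OF n])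
  then show "(\<lambda>N. tp (geoL r l N) x) \<longlonglongrightarrow> inverse (1 - of_real r * e (l * x))"
    unfolding sums_def tp_geoL by (simp add: divide_inverse)
qed

lemma PD_meas: "PD G \<Longrightarrow> G \<in> borel_measurable borel"
  unfolding PD_def by (metis borel_measurable_LIMSEQ_metric tp_meas)

lemma PD_bound: "PD G \<Longrightarrow> \<exists>B. \<forall>x. cmod (G x) \<le> B"
  unfolding PD_def by (metis LIMSEQ_le_const2 tendsto_norm)

lemma tp_bound: "cmod (tp L x) \<le> sum_list (map (\<lambda>p. \<bar>fst p\<bar>) L)"
proof (induction L)
  case (Cons p L)
  have "cmod (tp (p # L) x) \<le> cmod (of_real (fst p) * e (snd p * x)) + cmod (tp L x)"
    by (simp add: norm_triangle_ineq)
  then show ?case using Cons by (simp add: norm_mult)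
qed simp

definition good :: "real \<Rightarrow> real \<Rightarrow> complex \<Rightarrow> bool" where
  "good \<beta> \<delta> z \<longleftrightarrow> Re (exp (\<i> * of_real \<beta>) * z) \<ge> \<delta> * Re z \<and> \<delta> * Re z \<ge> 0"

lemma good_add: "good \<beta> \<delta> z \<Longrightarrow> good \<beta> \<delta> w \<Longrightarrow> good \<beta> \<delta> (z + w)"
  unfolding good_def by (simp add: algebra_simps)

lemma good_scale: assumes "a \<ge> 0" "good \<beta> \<delta> z" shows "good \<beta> \<delta> (of_real a * z)"
proof -
  have e1: "exp (\<i> * of_real \<beta>) * (of_real a * z) = of_real a * (exp (\<i> * of_real \<beta>) * z)"
    by (simp add: algebra_simps)
  have h: "\<delta> * Re z \<le> Re (exp (\<i> * of_real \<beta>) * z)" "0 \<le> \<delta> * Re z"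
    using assms(2) unfolding good_def by auto
  have "a * (\<delta> * Re z) \<le> a * Re (exp (\<i> * of_real \<beta>) * z)" using mult_left_mono[OF h(1) assms(1)] .
  moreover have "0 \<le> a * (\<delta> * Re z)" using h(2) assms(1) by simp
  ultimately show ?thesis unfolding good_def e1 by (simp add: algebra_simps)
qed

lemma good_zero: "good \<beta> \<delta> 0" unfolding good_def by simp

lemma good_lim: assumes "z \<longlonglongrightarrow> w" "\<And>N. good \<beta> \<delta> (z N)" shows "good \<beta> \<delta> w"
proof -
  have l1: "(\<lambda>N. Re (exp (\<i> * of_real \<beta>) * z N)) \<longlonglongrightarrow> Re (exp (\<i> * of_real \<beta>) * w)"
    by (intro tendsto_intros assms(1))
  have l2: "(\<lambda>N. \<delta> * Re (z N)) \<longlonglongrightarrow> \<delta> * Re w"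
    by (intro tendsto_intros assms(1))
  show ?thesis unfolding good_def
  proof
    show "\<delta> * Re w \<le> Re (exp (\<i> * of_real \<beta>) * w)"
      by (rule LIMSEQ_le[OF l2 l1]) (use assms(2) in \<open>auto simp: good_def\<close>)
    show "0 \<le> \<delta> * Re w"
      by (rule LIMSEQ_le_const[OF l2]) (use assms(2) in \<open>auto simp: good_def\<close>)
  qed
qed

context
  fixes K :: "real \<Rightarrow> real" and T \<beta> \<delta> :: real
  assumes K_L1: "integrable lborel K" and Tpos: "T > 0"
    and K_hat: "\<And>\<xi>. Re (exp (\<i> * of_real \<beta>) * fourier K \<xi>) \<ge> \<delta> * Re (fourier K \<xi>)
                     \<and> \<delta> * Re (fourier K \<xi>) \<ge> 0"
begin

lemma KT_int: "integrable lborel (\<lambda>x. K (x / T))"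
proof -
  have "integrable lborel (\<lambda>x. K (0 + (1/T) * x))"
    by (rule lborel_integrable_real_affine[OF K_L1]) (use Tpos in simp)
  then show ?thesis by simp
qed

lemma KT_meas[measurable]: "(\<lambda>x. K (x / T)) \<in> borel_measurable borel"
  using borel_measurable_integrable[OF KT_int] by simp

lemma int_bd:
  assumes [measurable]: "G \<in> borel_measurable borel" and b: "\<And>x. cmod (G x) \<le> B"
  shows "integrable lborel (\<lambda>x. G x * of_real (K (x / T)))"
proof (rule Bochner_Integration.integrable_bound[of lborel "\<lambda>x. B * K (x / T)"])
  show "integrable lborel (\<lambda>x. B * K (x / T))" using KT_int by simp
  show "(\<lambda>x. G x * complex_of_real (K (x / T))) \<in> borel_measurable lborel" by simp
  show "AE x in lborel. norm (G x * complex_of_real (K (x / T))) \<le> norm (B * K (x / T))"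
  proof (intro AE_I2)
    fix x
    have "norm (G x * complex_of_real (K (x / T))) = cmod (G x) * \<bar>K (x / T)\<bar>" by (simp add: norm_mult)
    also have "\<dots> \<le> \<bar>B\<bar> * \<bar>K (x / T)\<bar>" using b[of x] by (intro mult_right_mono) auto
    finally show "norm (G x * complex_of_real (K (x / T))) \<le> norm (B * K (x / T))" by (simp add: abs_mult)
  qed
qed

lemma J_char: "(LINT x|lborel. e (\<nu> * x) * of_real (K (x / T))) = of_real T * fourier K (- \<nu> * T)"
proof -
  have "(LINT x|lborel. e (\<nu> * x) * of_real (K (x / T)))
      = \<bar>T\<bar> *\<^sub>R (LINT x|lborel. e (\<nu> * (0 + T * x)) * of_real (K ((0 + T * x) / T)))"
    by (rule lborel_integral_real_affine) (use Tpos in simp)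
  also have "(\<lambda>x. e (\<nu> * (0 + T * x)) * of_real (K ((0 + T * x) / T)))
      = (\<lambda>x. of_real (K x) * e (- (- \<nu> * T) * x))"
    using Tpos by (auto simp: algebra_simps)
  finally show ?thesis using Tpos by (simp add: fourier_def scaleR_conv_of_real)
qed

lemma good_char: "good \<beta> \<delta> (LINT x|lborel. e (\<nu> * x) * of_real (K (x / T)))"
  unfolding J_char using K_hat[of "- \<nu> * T"] Tpos
  by (intro good_scale) (auto simp: good_def)

lemma good_tp: "nonnegL L \<Longrightarrow> good \<beta> \<delta> (LINT x|lborel. tp L x * of_real (K (x / T)))"
proof (induction L)
  case Nil then show ?case by (simp add: good_zero)
next
  case (Cons p L)
  have i1: "integrable lborel (\<lambda>x. e (snd p * x) * of_real (K (x / T)))"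
    by (rule int_bd[where B=1]) auto
  have i2: "integrable lborel (\<lambda>x. tp L x * of_real (K (x / T)))"
    by (rule int_bd[OF _ tp_bound]) simp
  have "(LINT x|lborel. tp (p # L) x * of_real (K (x / T)))
     = (LINT x|lborel. of_real (fst p) * (e (snd p * x) * of_real (K (x / T))) + tp L x * of_real (K (x / T)))"
    by (simp add: algebra_simps)
  also have "\<dots> = of_real (fst p) * (LINT x|lborel. e (snd p * x) * of_real (K (x / T)))
       + (LINT x|lborel. tp L x * of_real (K (x / T)))"
    using i1 i2 by simp
  finally show ?case using Cons by (auto simp: nonnegL_def intro!: good_add good_scale good_char)
qed

lemma PD_int: "PD G \<Longrightarrow> integrable lborel (\<lambda>x. G x * of_real (K (x / T)))"
  using PD_bound[of G] PD_meas[of G] int_bd by blast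

lemma PD_good: assumes "PD G" shows "good \<beta> \<delta> (LINT x|lborel. G x * of_real (K (x / T)))"
proof -
  obtain Ls B where L: "\<forall>N. nonnegL (Ls N)" "\<forall>N x. cmod (tp (Ls N) x) \<le> B"
      "\<forall>x. (\<lambda>N. tp (Ls N) x) \<longlonglongrightarrow> G x" using assms unfolding PD_def by blast
  have [measurable]: "G \<in> borel_measurable borel" using PD_meas[OF assms] .
  have "(\<lambda>N. LINT x|lborel. tp (Ls N) x * of_real (K (x / T))) \<longlonglongrightarrow> (LINT x|lborel. G x * of_real (K (x / T)))"
  proof (rule integral_dominated_convergence[where w="\<lambda>x. B * \<bar>K (x / T)\<bar>"])
    show "integrable lborel (\<lambda>x. B * \<bar>K (x / T)\<bar>)" using KT_int by simp
    show "AE x in lborel. (\<lambda>N. tp (Ls N) x * of_real (K (x / T))) \<longlonglongrightarrow> G x * of_real (K (x / T))"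
      using L(3) by (intro AE_I2 tendsto_intros) auto
    show "AE x in lborel. norm (tp (Ls N) x * of_real (K (x / T))) \<le> B * \<bar>K (x / T)\<bar>" for N
      using L(2) by (intro AE_I2) (auto simp: norm_mult intro: mult_right_mono)
  qed auto
  then show ?thesis by (rule good_lim) (use L(1) good_tp in auto)
qed

end

theorem proposition2p1:
  fixes f :: "nat \<Rightarrow> real" and lam :: "nat \<Rightarrow> real" and \<beta> r \<delta> T :: real
    and M :: "nat set" and K :: "real \<Rightarrow> real"
    and F R :: "real \<Rightarrow> complex"
  assumes f_nonneg: "\<And>n. n \<ge> 1 \<Longrightarrow> f n \<ge> 0"
    and f_summable: "summable (\<lambda>n. f (Suc n))"
    and lam_pos: "\<And>n. n \<ge> 1 \<Longrightarrow> lam n > 0"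
    and F_def: "\<And>x. F x = (\<Sum>n. of_real (f (Suc n)) * e (lam (Suc n) * x))"
    and beta: "- (pi / 2) < \<beta>" "\<beta> < pi / 2"
    and r: "0 < r" "r < 1"
    and M: "finite M" "M \<subseteq> {1..}"
    and R_def: "\<And>t. R t = (\<Prod>m\<in>M. inverse (1 - of_real r * e (lam m * t)))"
    and K_L1: "integrable lborel K"
    and K_supp: "closure {x. K x \<noteq> 0} \<subseteq> {0..}"
    and \<delta>_pos: "\<delta> > 0"
    and K_hat: "\<And>\<xi>. Re (exp (\<i> * of_real \<beta>) * fourier K \<xi>) \<ge> \<delta> * Re (fourier K \<xi>)
                     \<and> \<delta> * Re (fourier K \<xi>) \<ge> 0"
    and T: "T \<ge> 1"
  shows "(LINT x:{0..}|lborel. Re (exp (\<i> * of_real \<beta>) * F x) * (cmod (R x))\<^sup>2 * K (x / T))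
         \<ge> \<delta> * r * (\<Sum>m\<in>M. f m) * (LINT x:{0..}|lborel. (cmod (R x))\<^sup>2 * K (x / T))"
proof -
  have K0: "K y = 0" if "y < 0" for y
  proof (rule ccontr)
    assume "K y \<noteq> 0"
    then have "y \<in> {x. K x \<noteq> 0}" by simp
    then have "y \<in> closure {x. K x \<noteq> 0}" by (rule subsetD[OF closure_subset])
    then have "y \<in> {0..}" using K_supp by (rule rev_subsetD)
    then show False using that by simp
  qed
  have Tpos: "T > 0" using T by simp
  note PDg = PD_good[where K=K and T=T and \<beta>=\<beta> and \<delta>=\<delta>, OF K_L1 Tpos K_hat]
  note PDi = PD_int[where K=K and T=T and \<beta>=\<beta> and \<delta>=\<delta>, OF K_L1 Tpos K_hat]
  note intbd = int_bd[where K=K and T=T and \<beta>=\<beta> and \<delta>=\<delta>, OF K_L1 Tpos K_hat]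
  define eb where "eb = exp (\<i> * of_real \<beta>)"
  define g where "g m x = inverse (1 - of_real r * e (lam m * x))" for m x
  define J :: "(real \<Rightarrow> complex) \<Rightarrow> complex" where "J G = (LINT x|lborel. G x * of_real (K (x / T)))" for G
  define P where "P x = R x * cnj (R x)" for x
  have Rg: "R x = (\<Prod>m\<in>M. g m x)" for x by (simp add: R_def g_def)
  have PDgm: "PD (g m)" for m unfolding g_def[abs_def] using r by (intro PD_geo) auto
  have Rg': "R = (\<lambda>x. \<Prod>m\<in>M. g m x)" by (rule ext) (rule Rg)
  have PDR: "PD R" unfolding Rg' by (rule PD_prod[OF M(1)]) (rule PDgm)
  have PDP: "PD P" unfolding P_def by (intro PD_mult PD_cnj PDR)
  have PDE: "PD (\<lambda>x. e (lam n * x) * P x)" for n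
    using PD_mult[OF PD_char[of 1 "lam n"] PDP] by simp
  define R' where "R' m x = (\<Prod>k\<in>M - {m}. g k x)" for m x
  define H where "H m x = e (lam m * x) * R x * cnj (R' m x)" for m x
  have PDH: "PD (H m)" for m
  proof -
    have "PD (R' m)" unfolding R'_def using M(1) PDgm by (intro PD_prod) auto
    then show ?thesis unfolding H_def[abs_def]
      using PD_mult[OF PD_mult[OF PD_char[of 1 "lam m"] PDR] PD_cnj] by simp
  qed
  have ident: "e (lam m * x) * P x = of_real r * P x + H m x" if "m \<in> M" for m x
  proof -
    define u where "u = e (lam m * x)"
    have uu: "u * cnj u = 1" unfolding u_def by (rule e_cnj_mult)
    have nz: "1 - of_real r * cnj u \<noteq> 0"
    proof
      assume "1 - of_real r * cnj u = 0"
      then have "cmod (of_real r * cnj u) = 1" by (metis norm_one right_minus_eq)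
      then show False using r unfolding u_def by (simp add: norm_mult)
    qed
    define ci where "ci = inverse (1 - of_real r * cnj u)"
    have c1: "(1 - of_real r * cnj u) * ci = 1" unfolding ci_def using nz by simp
    have c2: "u * (1 - of_real r * cnj u) = u - of_real r * (u * cnj u)"
      by (simp add: algebra_simps)
    have key: "u * ci = of_real r * ci + u"
    proof -
      have "u * ci = of_real r * ci + (u * (1 - of_real r * cnj u)) * ci"
        unfolding c2 uu by (simp add: algebra_simps)
      also have "\<dots> = of_real r * ci + u" using c1 by (simp add: mult.assoc)
      finally show ?thesis .
    qed
    have cg: "cnj (g m x) = ci" unfolding g_def ci_def u_def by simp
    have RR: "R x = g m x * R' m x" unfolding Rg R'_def using that M(1) by (simp add: prod.remove)
    have "e (lam m * x) * P x = (u * ci) * (g m x * R' m x * cnj (R' m x))"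
      unfolding P_def u_def[symmetric] RR complex_cnj_mult cg by (simp only: ac_simps)
    also have "\<dots> = of_real r * P x + H m x"
      unfolding key H_def P_def RR u_def[symmetric] complex_cnj_mult cg by (simp add: algebra_simps)
    finally show ?thesis .
  qed
  define jP where "jP = J P"
  have goodP: "good \<beta> \<delta> jP" unfolding jP_def J_def using PDg[OF PDP] .
  have RHS: "(LINT x:{0..}|lborel. (cmod (R x))\<^sup>2 * K (x / T)) = Re jP"
  proof -
    have "(LINT x:{0..}|lborel. (cmod (R x))\<^sup>2 * K (x / T)) = (LINT x|lborel. (cmod (R x))\<^sup>2 * K (x / T))"
      unfolding set_lebesgue_integral_def
      by (intro Bochner_Integration.integral_cong) (auto simp: indicator_def K0 Tpos divide_neg_pos)
    moreover have "jP = of_real (LINT x|lborel. (cmod (R x))\<^sup>2 * K (x / T))"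
      unfolding jP_def J_def P_def complex_norm_square[symmetric] of_real_mult[symmetric]
      by (rule integral_complex_of_real)
    ultimately show ?thesis by simp
  qed
  define S where "S = (\<Sum>n. f (Suc n))"
  have fS: "f (Suc n) \<ge> 0" for n using f_nonneg by simp
  have S0: "S \<ge> 0" unfolding S_def using f_summable fS by (intro suminf_nonneg) auto
  have nsum: "summable (\<lambda>n. norm (of_real (f (Suc n)) * e (lam (Suc n) * x)))" for x
    using f_summable fS by (simp add: norm_mult)
  have Fsums: "(\<lambda>n. of_real (f (Suc n)) * e (lam (Suc n) * x)) sums F x" for x
    unfolding F_def using summable_norm_cancel[OF nsum] by (rule summable_sums)
  have Fbd: "cmod (\<Sum>n<N. of_real (f (Suc n)) * e (lam (Suc n) * x)) \<le> S" for N x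
  proof -
    have "cmod (\<Sum>n<N. of_real (f (Suc n)) * e (lam (Suc n) * x)) \<le> (\<Sum>n<N. f (Suc n))"
      by (rule order_trans[OF norm_sum]) (simp add: norm_mult fS)
    also have "\<dots> \<le> S" unfolding S_def using f_summable fS by (intro sum_le_suminf) auto
    finally show ?thesis .
  qed
  have Fmeas[measurable]: "F \<in> borel_measurable borel"
    by (rule borel_measurable_LIMSEQ_metric[of "\<lambda>N x. \<Sum>n<N. of_real (f (Suc n)) * e (lam (Suc n) * x)"])
       (use Fsums in \<open>auto simp: sums_def\<close>)
  obtain BP where BP: "\<And>x. cmod (P x) \<le> BP" using PD_bound[OF PDP] by blast
  have Pmeas[measurable]: "P \<in> borel_measurable borel" using PD_meas[OF PDP] .
  have JE: "J (\<lambda>x. e (lam n * x) * P x) = of_real r * jP + J (H n)" if "n \<in> M" for n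
  proof -
    have "J (\<lambda>x. e (lam n * x) * P x) = (LINT x|lborel. of_real r * (P x * of_real (K (x / T))) + H n x * of_real (K (x / T)))"
      unfolding J_def ident[OF that] by (simp add: algebra_simps)
    also have "\<dots> = (LINT x|lborel. of_real r * (P x * of_real (K (x / T)))) + (LINT x|lborel. H n x * of_real (K (x / T)))"
      by (rule Bochner_Integration.integral_add) (use PDi[OF PDP] PDi[OF PDH[of n]] in auto)
    also have "\<dots> = of_real r * jP + J (H n)"
      unfolding J_def jP_def by simp
    finally show ?thesis .
  qed
  define a where "a n = f (Suc n) * Re (eb * J (\<lambda>x. e (lam (Suc n) * x) * P x))" for n
  have Jsums: "(\<lambda>n. of_real (f (Suc n)) * J (\<lambda>x. e (lam (Suc n) * x) * P x)) sums J (\<lambda>x. F x * P x)"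
  proof -
    have lim: "(\<lambda>N. LINT x|lborel. (\<Sum>n<N. of_real (f (Suc n)) * e (lam (Suc n) * x)) * P x * of_real (K (x / T)))
        \<longlonglongrightarrow> (LINT x|lborel. F x * P x * of_real (K (x / T)))"
    proof (rule integral_dominated_convergence[where w="\<lambda>x. S * BP * \<bar>K (x / T)\<bar>"])
      show "integrable lborel (\<lambda>x. S * BP * \<bar>K (x / T)\<bar>)" using KT_int[where K=K and T=T and \<beta>=\<beta> and \<delta>=\<delta>, OF K_L1 Tpos K_hat] by simp
      show "AE x in lborel. (\<lambda>N. (\<Sum>n<N. of_real (f (Suc n)) * e (lam (Suc n) * x)) * P x * of_real (K (x / T)))
          \<longlonglongrightarrow> F x * P x * of_real (K (x / T))"
        using Fsums by (intro AE_I2 tendsto_intros) (auto simp: sums_def)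
      show "AE x in lborel. norm ((\<Sum>n<N. of_real (f (Suc n)) * e (lam (Suc n) * x)) * P x * of_real (K (x / T)))
          \<le> S * BP * \<bar>K (x / T)\<bar>" for N
      proof (intro AE_I2)
        fix x
        have "BP \<ge> 0" using BP[of x] norm_ge_zero order_trans by blast
        have "cmod (\<Sum>n<N. of_real (f (Suc n)) * e (lam (Suc n) * x)) * cmod (P x) \<le> S * BP"
          by (intro mult_mono Fbd BP S0) simp
        then show "norm ((\<Sum>n<N. of_real (f (Suc n)) * e (lam (Suc n) * x)) * P x * of_real (K (x / T)))
          \<le> S * BP * \<bar>K (x / T)\<bar>" by (simp add: norm_mult mult_right_mono)
      qed
    qed (use KT_meas[where K=K and T=T and \<beta>=\<beta> and \<delta>=\<delta>, OF K_L1 Tpos K_hat] in auto)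
    have eq: "(LINT x|lborel. (\<Sum>n<N. of_real (f (Suc n)) * e (lam (Suc n) * x)) * P x * of_real (K (x / T)))
        = (\<Sum>n<N. of_real (f (Suc n)) * J (\<lambda>x. e (lam (Suc n) * x) * P x))" for N
    proof -
      have "(LINT x|lborel. (\<Sum>n<N. of_real (f (Suc n)) * e (lam (Suc n) * x)) * P x * of_real (K (x / T)))
          = (LINT x|lborel. (\<Sum>n<N. of_real (f (Suc n)) * (e (lam (Suc n) * x) * P x * of_real (K (x / T)))))"
        by (simp add: sum_distrib_right mult.assoc)
      also have "\<dots> = (\<Sum>n<N. (LINT x|lborel. of_real (f (Suc n)) * (e (lam (Suc n) * x) * P x * of_real (K (x / T)))))"
        by (rule Bochner_Integration.integral_sum) (use PDi[OF PDE] in auto)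
      also have "\<dots> = (\<Sum>n<N. of_real (f (Suc n)) * J (\<lambda>x. e (lam (Suc n) * x) * P x))"
        unfolding J_def by simp
      finally show ?thesis .
    qed
    show ?thesis using lim unfolding sums_def eq J_def by simp
  qed
  have asums: "a sums Re (eb * J (\<lambda>x. F x * P x))"
  proof -
    have "(\<lambda>N. Re (eb * (\<Sum>n<N. of_real (f (Suc n)) * J (\<lambda>x. e (lam (Suc n) * x) * P x))))
        \<longlonglongrightarrow> Re (eb * J (\<lambda>x. F x * P x))"
      using Jsums unfolding sums_def by (intro tendsto_intros)
    moreover have "Re (eb * (\<Sum>n<N. of_real (f (Suc n)) * J (\<lambda>x. e (lam (Suc n) * x) * P x))) = (\<Sum>n<N. a n)" for N
      unfolding a_def sum_distrib_left Re_sum by (intro sum.cong) (auto simp: algebra_simps)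
    ultimately show ?thesis unfolding sums_def by simp
  qed
  define c where "c = r * \<delta> * Re jP"
  define b where "b n = (if Suc n \<in> M then f (Suc n) * c else 0)" for n
  define N' where "N' = {n. Suc n \<in> M}"
  have finN': "finite N'" unfolding N'_def using finite_vimageI[OF M(1), of Suc] by (simp add: vimage_def)
  have bsums: "b sums (\<Sum>n\<in>N'. b n)" by (rule sums_finite[OF finN']) (auto simp: b_def N'_def)
  have bsum: "(\<Sum>n\<in>N'. b n) = (\<Sum>m\<in>M. f m) * c"
  proof -
    have "(\<Sum>n\<in>N'. b n) = (\<Sum>n\<in>N'. f (Suc n) * c)" by (intro sum.cong) (auto simp: b_def N'_def)
    also have "\<dots> = (\<Sum>m\<in>Suc ` N'. f m * c)" by (subst sum.reindex) auto
    also have "Suc ` N' = M"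
    proof
      show "Suc ` N' \<subseteq> M" unfolding N'_def by auto
      show "M \<subseteq> Suc ` N'"
      proof
        fix m assume "m \<in> M"
        then have "m = Suc (m - 1)" "Suc (m - 1) \<in> M" using M(2) by auto
        then show "m \<in> Suc ` N'" unfolding N'_def by blast
      qed
    qed
    finally show ?thesis by (simp add: sum_distrib_right)
  qed
  have ab: "b n \<le> a n" for n
  proof -
    have gE: "good \<beta> \<delta> (J (\<lambda>x. e (lam (Suc n) * x) * P x))"
      unfolding J_def using PDg[OF PDE] .
    show ?thesis
    proof (cases "Suc n \<in> M")
      case True
      have gH: "good \<beta> \<delta> (J (H (Suc n)))" unfolding J_def using PDg[OF PDH] .
      have "Re (eb * J (\<lambda>x. e (lam (Suc n) * x) * P x)) = r * Re (eb * jP) + Re (eb * J (H (Suc n)))"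
        using JE[OF True] by (simp add: algebra_simps)
      also have "\<dots> \<ge> r * (\<delta> * Re jP) + 0"
        using goodP gH r unfolding good_def eb_def by (intro add_mono mult_left_mono) auto
      finally have "c \<le> Re (eb * J (\<lambda>x. e (lam (Suc n) * x) * P x))" unfolding c_def by simp
      then show ?thesis unfolding a_def b_def using True fS[of n] by (simp add: mult_left_mono)
    next
      case False
      then show ?thesis using gE fS[of n] unfolding a_def b_def good_def eb_def by simp
    qed
  qed
  have main: "(\<Sum>m\<in>M. f m) * c \<le> Re (eb * J (\<lambda>x. F x * P x))"
    using sums_le[OF ab bsums asums] bsum by simp
  have LHS: "(LINT x:{0..}|lborel. Re (exp (\<i> * of_real \<beta>) * F x) * (cmod (R x))\<^sup>2 * K (x / T))
      = Re (eb * J (\<lambda>x. F x * P x))"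
  proof -
    have int: "integrable lborel (\<lambda>x. F x * P x * of_real (K (x / T)))"
    proof (rule intbd[where B="S * BP"])
      fix x
      have "BP \<ge> 0" using BP[of x] norm_ge_zero order_trans by blast
      have "cmod (F x) \<le> S"
        by (rule LIMSEQ_le_const2[OF tendsto_norm[OF Fsums[of x, unfolded sums_def]]]) (use Fbd in auto)
      then show "cmod (F x * P x) \<le> S * BP" unfolding norm_mult
        by (intro mult_mono BP S0) simp_all
    qed simp
    have "(LINT x:{0..}|lborel. Re (exp (\<i> * of_real \<beta>) * F x) * (cmod (R x))\<^sup>2 * K (x / T))
        = (LINT x|lborel. Re (eb * (F x * P x * of_real (K (x / T)))))"
      unfolding set_lebesgue_integral_def
    proof (intro Bochner_Integration.integral_cong refl)
      fix x
      have "P x = of_real ((cmod (R x))\<^sup>2)" unfolding P_def complex_norm_square ..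
      then show "indicator {0..} x *\<^sub>R (Re (exp (\<i> * of_real \<beta>) * F x) * (cmod (R x))\<^sup>2 * K (x / T))
          = Re (eb * (F x * P x * of_real (K (x / T))))"
        using K0[of "x / T"] Tpos by (auto simp: indicator_def eb_def divide_neg_pos mult.assoc[symmetric])
    qed
    also have "\<dots> = Re (eb * J (\<lambda>x. F x * P x))"
      unfolding J_def
      using integral_bounded_linear[OF bounded_linear_compose[OF bounded_linear_Re bounded_linear_mult_right[of eb]] int]
      by (simp add: o_def)
    finally show ?thesis .
  qed
  show ?thesis unfolding LHS RHS using main unfolding c_def by (simp add: algebra_simps)
qed

end
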